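(* There is no polynomial $p(a,y,z)\in\mathbb{C}[a,y,z]$ such that for all $(y,z)\in\mathbb{C}^2$: $(y=0\wedge z=0)\iff(\exists a\in\mathbb{C})\,p(a,y,z)=0$. *)

theory Defs
  imports Complex_Main "HOL-Computational_Algebra.Polynomial"
begin

text \<open>A trivariate polynomial p(a,y,z) over the complex numbers is represented as a
nested univariate polynomial: C[a,y,z] = C[z][y][a]. The outermost variable is a,
the middle one y, the innermost one z.\<close>

definition eval3 :: "complex poly poly poly \<Rightarrow> complex \<Rightarrow> complex \<Rightarrow> complex \<Rightarrow> complex" where
  "eval3 p a y z = poly (poly (poly p [:[:a:]:]) [:y:]) z"

end

theory Submission
  imports Defs "HOL-Computational_Algebra.Fundamental_Theorem_Algebra"
begin

lemma hom3: "poly (map_poly (\<lambda>c. poly (poly c [:y:]) z) p) a = poly (poly (poly p [:[:a:]:]) [:y:]) z"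
  by (induction p) (simp_all add: map_poly_pCons)

lemma hom2: "poly (map_poly (\<lambda>q. poly q z) c) y = poly (poly c [:y:]) (z::complex)"
  by (induction c) (simp_all add: map_poly_pCons)

lemma noroot_const:
  fixes f :: "complex poly"
  assumes "\<And>x. poly f x \<noteq> 0"
  shows "poly f x = poly f w"
  using fundamental_theorem_of_algebra[of f] assms unfolding constant_def by blast

lemma agree0:
  fixes f g :: "complex poly"
  assumes "\<And>y. y \<noteq> 0 \<Longrightarrow> poly f y = poly g y"
  shows "poly f 0 = poly g 0"
proof -
  have "f - g = 0"
  proof (rule ccontr)
    assume "f - g \<noteq> 0"
    then have "finite {x. poly (f - g) x = 0}" by (rule poly_roots_finite)
    moreover have "UNIV - {0} \<subseteq> {x. poly (f - g) x = 0}" using assms by auto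
    ultimately have "finite (UNIV - {0::complex})" using finite_subset by blast
    then have "finite (UNIV::complex set)" by simp
    then show False using infinite_UNIV_char_0[where 'a=complex] by blast
  qed
  then show ?thesis by simp
qed

lemma agree2:
  fixes c d :: "complex poly poly"
  assumes "\<And>y z. y \<noteq> 0 \<Longrightarrow> poly (poly c [:y:]) z = poly (poly d [:y:]) z"
  shows "poly (poly c [:0:]) z = poly (poly d [:0:]) z"
proof -
  have "poly (map_poly (\<lambda>q. poly q z) c) 0 = poly (map_poly (\<lambda>q. poly q z) d) 0"
    by (rule agree0) (simp add: hom2 assms)
  then show ?thesis by (simp add: hom2)
qed

theorem corollary6p4:
  shows "\<not> (\<exists>p :: complex poly poly poly.
            \<forall>y z :: complex. (y = 0 \<and> z = 0) \<longleftrightarrow> (\<exists>a :: complex. eval3 p a y z = 0))"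
proof
  assume "\<exists>p :: complex poly poly poly.
            \<forall>y z :: complex. (y = 0 \<and> z = 0) \<longleftrightarrow> (\<exists>a :: complex. eval3 p a y z = 0)"
  then obtain p :: "complex poly poly poly" where
    P: "\<And>y z. (y = 0 \<and> z = 0) \<longleftrightarrow> (\<exists>a :: complex. eval3 p a y z = 0)" by blast
  have nz: "eval3 p a y z \<noteq> 0" if "y \<noteq> 0" for a y z using P[of y z] that by auto
  have c1: "eval3 p a y z = eval3 p 0 y z" if "y \<noteq> 0" for a y z
  proof -
    have "poly (map_poly (\<lambda>c. poly (poly c [:y:]) z) p) a = poly (map_poly (\<lambda>c. poly (poly c [:y:]) z) p) 0"
      by (rule noroot_const) (use nz that in \<open>simp add: hom3 eval3_def\<close>)
    then show ?thesis by (simp add: hom3 eval3_def)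
  qed
  have c2: "eval3 p a 0 0 = eval3 p 0 0 0" for a
    unfolding eval3_def
    by (rule agree2) (use c1 in \<open>auto simp: eval3_def\<close>)
  obtain a0 where "eval3 p a0 0 0 = 0" using P[of 0 0] by auto
  then have q00: "eval3 p 0 0 0 = 0" using c2[of a0] by simp
  have c3: "eval3 p 0 y 1 = eval3 p 0 y 0" if "y \<noteq> 0" for y
  proof -
    have "poly (poly (poly p [:[:0:]:]) [:y:]) 1 = poly (poly (poly p [:[:0:]:]) [:y:]) 0"
      by (rule noroot_const) (use nz[of y 0] that in \<open>simp add: eval3_def\<close>)
    then show ?thesis by (simp add: eval3_def)
  qed
  have "poly (map_poly (\<lambda>q. poly q 1) (poly p [:[:0:]:])) 0 = poly (map_poly (\<lambda>q. poly q 0) (poly p [:[:0:]:])) 0"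
    by (rule agree0) (use c3 in \<open>simp add: hom2 eval3_def\<close>)
  then have "eval3 p 0 0 1 = 0" using q00 by (simp add: hom2 eval3_def)
  then show False using P[of 0 1] by auto
qed

end
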